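(* For every $n\ge1$, among all pairs $(S,\sigma)$ with $S\subset\mathbb{Z}_{>0}$ finite of cardinality $n$ and $\sigma$ a permutation of $S$, the identity permutation of $S_n=\{1,\dots,n\}$ is the unique one minimizing $v(\sigma,\Psi)$.
   Context: Let $p$ be a prime and $y\in\mathbb{Z}_p$ not a non-negative integer, with $p$-adic digits $y=\sum_{n\ge0}y_np^n$, $0\le y_n<p$. Let $\pi,\theta$ be indeterminates and $\beta=\prod_{n\ge0}(1-\pi^{p^n}\theta)^{y_n}\in\mathbb{F}_p[[\pi]][[\theta]]$, written $\beta=\sum_{n\ge0}a_n\theta^n$; put $a_n=0$ for $n<0$. Let $\Psi$ be the $\mathbb{Z}_{>0}\times\mathbb{Z}_{>0}$ matrix with $\Psi_{m_1,m_2}=a_{pm_1-m_2}$. For a finite $S\subset\mathbb{Z}_{>0}$ and permutation $\sigma$ of $S$, $v(\sigma,\Psi)=\sum_{k\in S}v_\pi(\Psi_{k,\sigma(k)})\in\mathbb{Z}_{\ge0}\cup\{\infty\}$, where $v_\pi$ is the $\pi$-adic valuation with $v_\pi(0)=\infty$. *)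

theory Defs
  imports "HOL-Library.Extended_Nat" "HOL-Combinatorics.Permutations" "HOL-Library.FuncSet"
    "HOL-Computational_Algebra.Primes"
begin

text \<open>A p-adic integer y is represented by its digit sequence y_n (0 \<le> y_n < p).
  y is a non-negative integer iff only finitely many digits are nonzero.\<close>

definition padic_digits :: "nat \<Rightarrow> (nat \<Rightarrow> nat) \<Rightarrow> bool" where
  "padic_digits p y \<longleftrightarrow> (\<forall>n. y n < p)"

definition not_nonneg_int :: "(nat \<Rightarrow> nat) \<Rightarrow> bool" where
  "not_nonneg_int y \<longleftrightarrow> infinite {n. y n \<noteq> 0}"

text \<open>beta = prod_n (1 - pi^(p^n) theta)^(y_n) = sum_m a_m theta^m.
  Expanding each factor binomially, (1 - pi^(p^n) theta)^(y_n)
  = sum_k (-1)^k (y_n choose k) pi^(k p^n) theta^k, so the coefficient of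
  pi^e theta^m in beta is the (integer, to be reduced mod p) sum over exponent
  choices k_n with sum_n k_n = m and sum_n k_n p^n = e.  Since p \<ge> 2,
  only indices n \<le> e and values k_n \<le> m can occur.\<close>

definition beta_coeff :: "nat \<Rightarrow> (nat \<Rightarrow> nat) \<Rightarrow> nat \<Rightarrow> nat \<Rightarrow> int" where
  "beta_coeff p y m e =
     (\<Sum>k \<in> {k \<in> {..e} \<rightarrow>\<^sub>E {..m}. (\<Sum>i\<le>e. k i) = m \<and> (\<Sum>i\<le>e. k i * p ^ i) = e}.
        \<Prod>i\<le>e. (-1) ^ k i * int (y i choose k i))"

text \<open>pi-adic valuation of a_m in F_p[[pi]] (a_m = 0 for m < 0), with v(0) = \<infinity>.\<close>

definition val_a :: "nat \<Rightarrow> (nat \<Rightarrow> nat) \<Rightarrow> int \<Rightarrow> enat" where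
  "val_a p y m =
     (if m < 0 then \<infinity>
      else if \<exists>e. \<not> int p dvd beta_coeff p y (nat m) e
           then enat (LEAST e. \<not> int p dvd beta_coeff p y (nat m) e)
           else \<infinity>)"

definition val_Psi :: "nat \<Rightarrow> (nat \<Rightarrow> nat) \<Rightarrow> nat \<Rightarrow> nat \<Rightarrow> enat" where
  "val_Psi p y m1 m2 = val_a p y (int p * int m1 - int m2)"

definition v_perm :: "nat \<Rightarrow> (nat \<Rightarrow> nat) \<Rightarrow> nat set \<Rightarrow> (nat \<Rightarrow> nat) \<Rightarrow> enat" where
  "v_perm p y S \<sigma> = (\<Sum>k\<in>S. val_Psi p y k (\<sigma> k))"

end

theory Submission
  imports Defs
begin

lemma permutes_remove_fixed:
  assumes "\<sigma> permutes S" "\<sigma> M = M"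
  shows "\<sigma> permutes (S - {M})"
proof -
  have "\<forall>x. x \<notin> S - {M} \<longrightarrow> \<sigma> x = x" using assms(1,2) unfolding permutes_def by auto
  moreover have "\<forall>y. \<exists>!x. \<sigma> x = y" using assms(1) unfolding permutes_def by blast
  ultimately show ?thesis unfolding permutes_def by blast
qed
lemma main_abstract:
  fixes g :: "nat \<Rightarrow> nat" and p :: nat
  assumes p2: "p \<ge> 2"
  and gmono: "\<And>m m'. m < m' \<Longrightarrow> g m < g m'"
  and conv: "\<And>a b d. a + p \<le> b \<Longrightarrow> 0 < d \<Longrightarrow> g (a+d) + g b < g (b+d) + g a"
  shows "finite S \<Longrightarrow> 0 \<notin> S \<Longrightarrow> card S = n \<Longrightarrow> \<sigma> permutes S \<Longrightarrow> (\<forall>k\<in>S. \<sigma> k \<le> p*k) \<Longrightarrow>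
     (\<Sum>k\<in>{1..n}. g ((p-1)*k)) \<le> (\<Sum>k\<in>S. g (p*k - \<sigma> k)) \<and>
     ((\<Sum>k\<in>S. g (p*k - \<sigma> k)) = (\<Sum>k\<in>{1..n}. g ((p-1)*k)) \<longrightarrow> S = {1..n} \<and> \<sigma> = id)"
proof (induction n arbitrary: S \<sigma>)
  case 0
  then have "S = {}" by auto
  with 0 show ?case by (simp add: permutes_empty)
next
  case (Suc n)
  note fin = Suc.prems(1) and nz = Suc.prems(2) and cS = Suc.prems(3)
    and perm = Suc.prems(4) and le = Suc.prems(5)
  define M where "M = Max S"
  have Sne: "S \<noteq> {}" using cS by auto
  have MS: "M \<in> S" unfolding M_def using fin Sne by simp
  have Mmax: "\<And>k. k \<in> S \<Longrightarrow> k \<le> M" unfolding M_def using fin by simp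
  have "S \<subseteq> {1..M}" using Mmax nz by (auto simp: Suc_le_eq intro: Nat.gr0I)
  then have "card S \<le> card {1..M}" by (rule card_mono[rotated]) simp
  then have MgeN: "Suc n \<le> M" using cS by simp
  define S' where "S' = S - {M}"
  have finS': "finite S'" "0 \<notin> S'" using fin nz by (auto simp: S'_def)
  have cS': "card S' = n" using cS MS fin by (simp add: S'_def)
  define f where "f = (\<lambda>k. g (p*k - \<sigma> k))"
  define Wid where "Wid = (\<lambda>n. \<Sum>k\<in>{1..n}. g ((p-1)*k))"
  have WidS: "Wid (Suc n) = Wid n + g ((p-1)*Suc n)" unfolding Wid_def by simp
  have sumS: "(\<Sum>k\<in>S. f k) = f M + (\<Sum>k\<in>S'. f k)"
    unfolding S'_def using fin MS by (simp add: sum.remove)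
  have sMS: "\<sigma> M \<in> S" using perm MS by (simp add: permutes_in_image)
  then have sMle: "\<sigma> M \<le> M" using Mmax by simp
  have pm1: "p*M - M = (p-1)*M" by (simp add: diff_mult_distrib)
  have mono_le: "g ((p-1)*Suc n) \<le> g ((p-1)*M)"
  proof (cases "Suc n = M")
    case False
    then have "(p-1)*Suc n < (p-1)*M" using MgeN p2 by (intro mult_less_mono2) auto
    then show ?thesis using gmono by (simp add: less_imp_le)
  qed simp
  show ?case
  proof (cases "\<sigma> M = M")
    case True
    have perm': "\<sigma> permutes S'" unfolding S'_def using perm True by (rule permutes_remove_fixed)
    have le': "\<forall>k\<in>S'. \<sigma> k \<le> p*k" using le by (auto simp: S'_def)
    from Suc.IH[OF finS' cS' perm' le'] have IH:
      "Wid n \<le> (\<Sum>k\<in>S'. f k)" "(\<Sum>k\<in>S'. f k) = Wid n \<longrightarrow> S' = {1..n} \<and> \<sigma> = id"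
      unfolding Wid_def f_def by auto
    have fM: "f M = g ((p-1)*M)" unfolding f_def using True pm1 by simp
    have A: "Wid (Suc n) \<le> (\<Sum>k\<in>S. f k)" using IH(1) mono_le sumS fM WidS by simp
    have B: "S = {1..Suc n} \<and> \<sigma> = id" if eq: "(\<Sum>k\<in>S. f k) = Wid (Suc n)"
    proof -
      have e1: "(\<Sum>k\<in>S'. f k) = Wid n" using eq IH(1) mono_le sumS fM WidS by simp
      have e2: "g ((p-1)*Suc n) = g ((p-1)*M)" using eq IH(1) mono_le sumS fM WidS by simp
      have "M = Suc n"
      proof (rule ccontr)
        assume "M \<noteq> Suc n"
        then have "(p-1)*Suc n < (p-1)*M" using MgeN p2 by (intro mult_less_mono2) auto
        then show False using gmono e2 by (metis less_irrefl)
      qed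
      moreover have "S' = {1..n}" "\<sigma> = id" using IH(2) e1 by auto
      ultimately have "S = insert (Suc n) {1..n}" using MS unfolding S'_def by auto
      then show ?thesis using \<open>\<sigma> = id\<close> by auto
    qed
    show ?thesis using A B unfolding Wid_def f_def by blast
  next
    case False
    obtain k' where k'S: "k' \<in> S" and sk': "\<sigma> k' = M"
      using MS permutes_image[OF perm] by (metis imageE)
    have k'M: "k' \<noteq> M" using False sk' by auto
    have k'S': "k' \<in> S'" using k'S k'M by (simp add: S'_def)
    have k'lt: "k' < M" using Mmax k'S k'M by fastforce
    have sMlt: "\<sigma> M < M" using sMle False by simp
    have Mle: "M \<le> p*k'" using le k'S sk' by auto
    define \<tau> where "\<tau> = Transposition.transpose M (\<sigma> M) \<circ> \<sigma>"
    have tperm: "\<tau> permutes S" unfolding \<tau>_def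
      by (rule permutes_compose[OF perm permutes_swap_id[OF MS sMS]])
    have tM: "\<tau> M = M" unfolding \<tau>_def by simp
    have tk': "\<tau> k' = \<sigma> M" unfolding \<tau>_def using sk' by simp
    have inj: "inj \<sigma>" using perm by (rule permutes_inj)
    have tk: "\<tau> k = \<sigma> k" if "k \<noteq> k'" "k \<noteq> M" for k
    proof -
      have "\<sigma> k \<noteq> M" using that sk' inj by (metis injD)
      moreover have "\<sigma> k \<noteq> \<sigma> M" using that inj by (metis injD)
      ultimately show ?thesis unfolding \<tau>_def by (simp add: transpose_def)
    qed
    have tperm': "\<tau> permutes S'" unfolding S'_def using tperm tM by (rule permutes_remove_fixed)
    have le': "\<forall>k\<in>S'. \<tau> k \<le> p*k"
    proof
      fix k assume kS': "k \<in> S'"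
      show "\<tau> k \<le> p*k"
      proof (cases "k = k'")
        case True then show ?thesis using tk' sMlt Mle by simp
      next
        case False
        then show ?thesis using tk[OF False] kS' le by (auto simp: S'_def)
      qed
    qed
    define f' where "f' = (\<lambda>k. g (p*k - \<tau> k))"
    from Suc.IH[OF finS' cS' tperm' le'] have IH: "Wid n \<le> (\<Sum>k\<in>S'. f' k)"
      unfolding Wid_def f'_def by auto
    define R where "R = (\<Sum>k\<in>S' - {k'}. f k)"
    have sumS': "(\<Sum>k\<in>S'. f k) = f k' + R" unfolding R_def using finS' k'S' by (simp add: sum.remove)
    have "(\<Sum>k\<in>S'. f' k) = f' k' + (\<Sum>k\<in>S' - {k'}. f' k)" using finS' k'S' by (simp add: sum.remove)
    also have "(\<Sum>k\<in>S' - {k'}. f' k) = R" unfolding R_def f'_def f_def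
      by (rule sum.cong) (auto simp: S'_def tk)
    finally have sumS'': "(\<Sum>k\<in>S'. f' k) = f' k' + R" .
    define a where "a = p*k' - M"
    define b where "b = (p-1)*M"
    define d where "d = M - \<sigma> M"
    have h1: "p * Suc k' \<le> p * M" using k'lt by (intro mult_le_mono2) simp
    have ab: "a + p \<le> b" unfolding a_def b_def using h1 Mle pm1 by simp
    have d0: "0 < d" unfolding d_def using sMlt by simp
    have ad: "a + d = p*k' - \<sigma> M" unfolding a_def d_def using Mle sMlt by simp
    have MpM: "M \<le> p*M" using p2 by simp
    have bd: "b + d = p*M - \<sigma> M" unfolding b_def d_def using pm1 sMlt MpM by arith
    have C: "g (a+d) + g b < g (b+d) + g a" by (rule conv[OF ab d0])
    have fM: "f M = g (b+d)" unfolding f_def bd ..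
    have fk': "f k' = g a" unfolding f_def a_def sk' ..
    have f'k': "f' k' = g (a+d)" unfolding f'_def ad tk' ..
    have "Wid (Suc n) < (\<Sum>k\<in>S. f k)"
      using IH C sumS sumS' sumS'' fM fk' f'k' WidS mono_le unfolding b_def by linarith
    then show ?thesis unfolding Wid_def f_def by auto
  qed
qed


definition Yv :: "(nat \<Rightarrow> nat) \<Rightarrow> nat \<Rightarrow> nat" where "Yv y i = (\<Sum>l<i. y l)"
definition gk :: "(nat \<Rightarrow> nat) \<Rightarrow> nat \<Rightarrow> nat \<Rightarrow> nat" where "gk y m i = min (y i) (m - Yv y i)"
definition NN :: "(nat \<Rightarrow> nat) \<Rightarrow> nat \<Rightarrow> nat" where "NN y m = (LEAST N. m \<le> Yv y N)"
definition gg :: "nat \<Rightarrow> (nat \<Rightarrow> nat) \<Rightarrow> nat \<Rightarrow> nat" where "gg p y m = (\<Sum>i<NN y m. gk y m i * p^i)"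

lemma Yv_Suc: "Yv y (Suc i) = Yv y i + y i" by (simp add: Yv_def)
lemma Yv_0: "Yv y 0 = 0" by (simp add: Yv_def)
lemma Yv_mono: "i \<le> j \<Longrightarrow> Yv y i \<le> Yv y j"
  unfolding Yv_def by (rule sum_mono2) auto

lemma Yv_unbounded: "not_nonneg_int y \<Longrightarrow> \<exists>N. m \<le> Yv y N"
proof (induction m)
  case 0 then show ?case by auto
next
  case (Suc m)
  then obtain N where N: "m \<le> Yv y N" by auto
  have "infinite {n. y n \<noteq> 0}" using Suc.prems unfolding not_nonneg_int_def .
  then have "\<exists>j\<ge>N. j \<in> {n. y n \<noteq> 0}" unfolding infinite_nat_iff_unbounded_le by blast
  then obtain j where j: "j \<ge> N" "y j \<noteq> 0" by blast
  have "Yv y N \<le> Yv y j" using j(1) by (rule Yv_mono)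
  then have "Suc m \<le> Yv y (Suc j)" using N j by (simp add: Yv_Suc)
  then show ?case by blast
qed

lemma NN_prop: "not_nonneg_int y \<Longrightarrow> m \<le> Yv y (NN y m)"
proof -
  assume "not_nonneg_int y"
  then obtain N where "m \<le> Yv y N" using Yv_unbounded by blast
  then show ?thesis unfolding NN_def by (rule LeastI)
qed

lemma NN_le: "m \<le> Yv y N \<Longrightarrow> NN y m \<le> N"
  unfolding NN_def by (rule Least_le)

lemma gk_zero: "not_nonneg_int y \<Longrightarrow> NN y m \<le> i \<Longrightarrow> gk y m i = 0"
  unfolding gk_def using NN_prop[of y m] Yv_mono[of "NN y m" i y] by simp

lemma gk_le: "gk y m i \<le> y i" "gk y m i \<le> m"
  unfolding gk_def by auto

lemma gg_ext: "not_nonneg_int y \<Longrightarrow> NN y m \<le> N \<Longrightarrow> (\<Sum>i<N. gk y m i * p^i) = gg p y m"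
  unfolding gg_def by (rule sum.mono_neutral_left[symmetric]) (auto simp: gk_zero)

lemma gk_prefix: "(\<Sum>l<i. gk y m l) = min m (Yv y i)"
  by (induction i) (auto simp: gk_def Yv_Suc Yv_0)

lemma sum_split_at: "i \<le> (N::nat) \<Longrightarrow> sum f {..<N} = sum f {..<i} + sum f {i..<N}"
proof -
  assume "i \<le> N"
  then have "{..<N} = {..<i} \<union> {i..<N}" by auto
  moreover have "{..<i} \<inter> {i..<N} = {}" by auto
  ultimately show ?thesis by (simp add: sum.union_disjoint)
qed

definition ww :: "nat \<Rightarrow> nat \<Rightarrow> nat" where "ww p i = (if i = 0 then 1 else p^i - p^(i-1))"

lemma ww_sum: "p \<ge> 1 \<Longrightarrow> (\<Sum>i<Suc N. ww p i) = p^N"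
proof (induction N)
  case 0 then show ?case by (simp add: ww_def)
next
  case (Suc N)
  have "p^N \<le> p^Suc N" using Suc.prems by simp
  then show ?case using Suc by (simp add: ww_def)
qed

lemma ww_pos: "p \<ge> 2 \<Longrightarrow> ww p i > 0"
proof (cases i)
  case (Suc j)
  assume "p \<ge> 2"
  then have "p^j < p^Suc j" by simp
  then show ?thesis using Suc by (simp add: ww_def)
qed (simp add: ww_def)

lemma abel: "p \<ge> 1 \<Longrightarrow> (\<Sum>i<N. k i * p^i) = (\<Sum>i<N. ww p i * (\<Sum>l\<in>{i..<N}. k l))"
proof (induction N)
  case 0 then show ?case by simp
next
  case (Suc N)
  have aux: "(\<Sum>i\<in>A. ww p i * c) = c * (\<Sum>i\<in>A. ww p i)" for A c
    by (simp add: sum_distrib_left mult.commute)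
  have "(\<Sum>i<Suc N. ww p i * (\<Sum>l\<in>{i..<Suc N}. k l))
      = (\<Sum>i<Suc N. ww p i * (\<Sum>l\<in>{i..<N}. k l) + ww p i * k N)"
    by (rule sum.cong) (auto simp: algebra_simps)
  also have "\<dots> = (\<Sum>i<Suc N. ww p i * (\<Sum>l\<in>{i..<N}. k l)) + k N * (\<Sum>i<Suc N. ww p i)"
    using aux by (simp add: sum.distrib)
  also have "(\<Sum>i<Suc N. ww p i * (\<Sum>l\<in>{i..<N}. k l)) = (\<Sum>i<N. ww p i * (\<Sum>l\<in>{i..<N}. k l))"
    by simp
  also have "(\<Sum>i<Suc N. ww p i) = p^N" using Suc.prems by (rule ww_sum)
  finally show ?case using Suc by simp
qed

lemma cost_bound:
  assumes p2: "p \<ge> 2" and ky: "\<forall>i<N. k i \<le> y i" and km: "(\<Sum>i<N. k i) = m"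
  shows "(\<Sum>i<N. gk y m i * p^i) \<le> (\<Sum>i<N. k i * p^i)
     \<and> ((\<Sum>i<N. k i * p^i) = (\<Sum>i<N. gk y m i * p^i) \<longrightarrow> (\<forall>i<N. k i = gk y m i))"
proof -
  define T where "T = (\<lambda>h i. \<Sum>l\<in>{i..<N}. (h l::nat))"
  have Tk: "T k i = m - (\<Sum>l<i. k l)" if "i \<le> N" for i
    using sum_split_at[OF that, of k] km unfolding T_def by simp
  have mY: "m \<le> Yv y N" unfolding Yv_def using km ky by (metis lessThan_iff sum_mono)
  have gsum: "(\<Sum>l<N. gk y m l) = m" using gk_prefix[of y m N] mY by simp
  have Tg: "T (gk y m) i = m - min m (Yv y i)" if "i \<le> N" for i
    using sum_split_at[OF that, of "gk y m"] gsum gk_prefix[of y m i] unfolding T_def by simp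
  have Ple: "(\<Sum>l<i. k l) \<le> min m (Yv y i)" if "i \<le> N" for i
  proof -
    have "(\<Sum>l<i. k l) \<le> m" using sum_split_at[OF that, of k] km by simp
    moreover have "(\<Sum>l<i. k l) \<le> Yv y i" unfolding Yv_def using ky that
      by (intro sum_mono) auto
    ultimately show ?thesis by simp
  qed
  have Tle: "T (gk y m) i \<le> T k i" if "i \<le> N" for i
    using Tk[OF that] Tg[OF that] Ple[OF that] by (metis diff_le_mono2)
  have p1: "p \<ge> 1" using p2 by simp
  have A: "(\<Sum>i<N. k i * p^i) = (\<Sum>i<N. ww p i * T k i)" unfolding T_def by (rule abel[OF p1])
  have B: "(\<Sum>i<N. gk y m i * p^i) = (\<Sum>i<N. ww p i * T (gk y m) i)" unfolding T_def by (rule abel[OF p1])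
  have le: "(\<Sum>i<N. ww p i * T (gk y m) i) \<le> (\<Sum>i<N. ww p i * T k i)"
    by (intro sum_mono mult_le_mono2 Tle) simp
  have eqT: "\<forall>i<N. T k i = T (gk y m) i" if eq: "(\<Sum>i<N. k i * p^i) = (\<Sum>i<N. gk y m i * p^i)"
  proof (rule ccontr)
    assume "\<not> ?thesis"
    then obtain i where i: "i < N" "T k i \<noteq> T (gk y m) i" by blast
    then have "T (gk y m) i < T k i" using Tle[of i] by simp
    then have "ww p i * T (gk y m) i < ww p i * T k i" using ww_pos[OF p2] by simp
    then have "(\<Sum>i<N. ww p i * T (gk y m) i) < (\<Sum>i<N. ww p i * T k i)"
      using i(1) by (intro sum_strict_mono_ex1) (auto intro: mult_le_mono2 Tle)
    then show False using eq A B by simp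
  qed
  have Tsuc: "T h i = h i + T h (Suc i)" if "i < N" for h i
    unfolding T_def using that by (simp add: sum.atLeast_Suc_lessThan)
  have TN: "T h N = 0" for h unfolding T_def by simp
  have "\<forall>i<N. k i = gk y m i" if eq: "(\<Sum>i<N. k i * p^i) = (\<Sum>i<N. gk y m i * p^i)"
  proof (intro allI impI)
    fix i assume i: "i < N"
    have e1: "T k i = T (gk y m) i" using eqT[OF eq] i by simp
    have e2: "T k (Suc i) = T (gk y m) (Suc i)"
    proof (cases "Suc i = N")
      case True then show ?thesis using TN by simp
    next
      case False then show ?thesis using eqT[OF eq] i by simp
    qed
    show "k i = gk y m i" using e1 e2 Tsuc[OF i, of k] Tsuc[OF i, of "gk y m"] by simp
  qed
  then show ?thesis using A B le by simp
qed


lemma binom_not_dvd: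
  assumes "prime p" "n < p" "k \<le> n"
  shows "\<not> p dvd (n choose k)"
proof
  assume "p dvd (n choose k)"
  then have "p dvd fact k * fact (n - k) * (n choose k)" by simp
  then have "p dvd fact n" using binomial_fact_lemma[OF assms(3)] by simp
  then show False using prime_dvd_fact_iff[OF assms(1)] assms(2) by simp
qed

lemma NN_le_gg:
  assumes p2: "p \<ge> 2" and inf: "not_nonneg_int y"
  shows "NN y m \<le> Suc (gg p y m)"
proof (cases "NN y m")
  case 0 then show ?thesis by simp
next
  case (Suc L)
  have YL: "Yv y L < m"
  proof (rule ccontr)
    assume "\<not> Yv y L < m"
    then have "NN y m \<le> L" by (intro NN_le) simp
    then show False using Suc by simp
  qed
  have "m \<le> Yv y (Suc L)" using NN_prop[OF inf, of m] Suc by simp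
  then have yL: "y L > 0" using YL by (simp add: Yv_Suc)
  have gL: "gk y m L \<ge> 1" unfolding gk_def using yL YL by simp
  have "gg p y m = (\<Sum>i<Suc L. gk y m i * p^i)" unfolding gg_def Suc ..
  also have "\<dots> = gk y m L * p^L + (\<Sum>i<L. gk y m i * p^i)" by simp
  finally have a1: "gk y m L * p^L \<le> gg p y m" by simp
  have a2: "p^L \<le> gk y m L * p^L" using gL by simp
  have a3: "2^L \<le> p^L" using p2 by (simp add: power_mono)
  have a4: "L < 2^L" by (rule less_exp)
  have "L < gg p y m" using a1 a2 a3 a4 by linarith
  then show ?thesis using Suc by simp
qed

lemma val_a_eq:
  assumes pp: "prime p" and dig: "padic_digits p y" and inf: "not_nonneg_int y"
  shows "val_a p y (int m) = enat (gg p y m)"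
proof -
  have p2: "p \<ge> 2" using pp by (rule prime_ge_2_nat)
  have yp: "y i < p" for i using dig by (simp add: padic_digits_def)
  define K where "K = (\<lambda>e. {k \<in> {..e} \<rightarrow>\<^sub>E {..m}. (\<Sum>i\<le>e. k i) = m \<and> (\<Sum>i\<le>e. k i * p ^ i) = e})"
  define F where "F = (\<lambda>e k. \<Prod>i\<le>e. (-1) ^ k i * int (y i choose k i))"
  have bc: "beta_coeff p y m e = (\<Sum>k\<in>K e. F e k)" for e
    unfolding beta_coeff_def K_def F_def ..
  have finK: "finite (K e)" for e
  proof -
    have "K e \<subseteq> {..e} \<rightarrow>\<^sub>E {..m}" unfolding K_def by auto
    moreover have "finite ({..e} \<rightarrow>\<^sub>E {..m})" by (intro finite_PiE) auto
    ultimately show ?thesis by (rule finite_subset)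
  qed
  have key: "gg p y m \<le> e \<and> (e = gg p y m \<longrightarrow> (\<forall>i\<le>e. k i = gk y m i))"
    if kK: "k \<in> K e" and ky: "\<forall>i\<le>e. k i \<le> y i" for k e
  proof -
    have s1: "(\<Sum>i<Suc e. k i) = m" using kK unfolding K_def by (simp add: lessThan_Suc_atMost)
    have s2: "(\<Sum>i<Suc e. k i * p^i) = e" using kK unfolding K_def by (simp add: lessThan_Suc_atMost)
    have ky': "\<forall>i<Suc e. k i \<le> y i" using ky by (simp add: less_Suc_eq_le)
    have "m \<le> Yv y (Suc e)" unfolding Yv_def using s1 ky' by (metis lessThan_iff sum_mono)
    then have NNe: "NN y m \<le> Suc e" by (rule NN_le)
    have gge: "(\<Sum>i<Suc e. gk y m i * p^i) = gg p y m" by (rule gg_ext[OF inf NNe])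
    have cb: "(\<Sum>i<Suc e. gk y m i * p^i) \<le> (\<Sum>i<Suc e. k i * p^i)"
      "(\<Sum>i<Suc e. k i * p^i) = (\<Sum>i<Suc e. gk y m i * p^i) \<longrightarrow> (\<forall>i<Suc e. k i = gk y m i)"
      using cost_bound[OF p2 ky' s1] by blast+
    have "gg p y m \<le> e" using cb(1) s2 gge by simp
    moreover have "\<forall>i\<le>e. k i = gk y m i" if "e = gg p y m"
    proof -
      have "(\<Sum>i<Suc e. k i * p^i) = (\<Sum>i<Suc e. gk y m i * p^i)" using s2 gge that by simp
      then have "\<forall>i<Suc e. k i = gk y m i" using cb(2) by blast
      then show ?thesis by (simp add: less_Suc_eq_le)
    qed
    ultimately show ?thesis by blast
  qed
  have zero: "F e k = 0" if kK: "k \<in> K e" and nle: "\<not> (\<forall>i\<le>e. k i \<le> y i)" for k e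
  proof -
    from nle obtain i where "i \<le> e" "y i < k i" using not_le by blast
    then have "(-1) ^ k i * int (y i choose k i) = 0" by simp
    then show ?thesis unfolding F_def using \<open>i \<le> e\<close> by (intro prod_zero) auto
  qed
  have below: "beta_coeff p y m e = 0" if "e < gg p y m" for e
  proof -
    have "F e k = 0" if "k \<in> K e" for k
    proof (cases "\<forall>i\<le>e. k i \<le> y i")
      case True then show ?thesis using key[OF that True] \<open>e < gg p y m\<close> by simp
    qed (rule zero[OF that])
    then show ?thesis unfolding bc by simp
  qed
  define E where "E = gg p y m"
  define g0 where "g0 = restrict (gk y m) {..E}"
  have NNE: "NN y m \<le> Suc E" unfolding E_def by (rule NN_le_gg[OF p2 inf])
  have g0K: "g0 \<in> K E"
  proof -
    have "g0 \<in> {..E} \<rightarrow>\<^sub>E {..m}" unfolding g0_def by (auto simp: restrict_PiE_iff gk_le)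
    moreover have "(\<Sum>i\<le>E. g0 i) = m"
    proof -
      have "(\<Sum>i\<le>E. g0 i) = (\<Sum>i<Suc E. gk y m i)" unfolding g0_def
        by (simp add: lessThan_Suc_atMost)
      also have "\<dots> = min m (Yv y (Suc E))" by (rule gk_prefix)
      also have "\<dots> = m" using NN_prop[OF inf, of m] Yv_mono[OF NNE, of y] by simp
      finally show ?thesis .
    qed
    moreover have "(\<Sum>i\<le>E. g0 i * p^i) = E"
    proof -
      have "(\<Sum>i\<le>E. g0 i * p^i) = (\<Sum>i<Suc E. gk y m i * p^i)" unfolding g0_def
        by (simp add: lessThan_Suc_atMost)
      also have "\<dots> = E" unfolding E_def by (rule gg_ext[OF inf NNE[unfolded E_def]])
      finally show ?thesis .
    qed
    ultimately show ?thesis unfolding K_def by simp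
  qed
  have others: "F E k = 0" if "k \<in> K E - {g0}" for k
  proof (cases "\<forall>i\<le>E. k i \<le> y i")
    case True
    have "\<forall>i\<le>E. k i = gk y m i" using key[of k E] that True unfolding E_def by auto
    moreover have "k \<in> {..E} \<rightarrow>\<^sub>E {..m}" using that unfolding K_def by auto
    ultimately have "k = g0" unfolding g0_def
      by (intro ext) (auto simp: PiE_def extensional_def)
    then show ?thesis using that by simp
  next
    case False then show ?thesis using zero[of k E] that by auto
  qed
  have atE: "beta_coeff p y m E = F E g0"
  proof -
    have "beta_coeff p y m E = F E g0 + (\<Sum>k\<in>K E - {g0}. F E k)"
      unfolding bc using finK g0K by (simp add: sum.remove)
    also have "(\<Sum>k\<in>K E - {g0}. F E k) = 0" using others by simp
    finally show ?thesis by simp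
  qed
  have ppi: "prime (int p)" using pp by (simp add: prime_nat_int_transfer)
  have ndvd: "\<not> int p dvd beta_coeff p y m E"
  proof
    assume "int p dvd beta_coeff p y m E"
    then have "int p dvd F E g0" using atE by simp
    then have "\<exists>i\<in>{..E}. int p dvd (-1) ^ g0 i * int (y i choose g0 i)"
      unfolding F_def by (subst (asm) prime_dvd_prod_iff[OF _ ppi]) auto
    then obtain i where i: "i \<in> {..E}" "int p dvd (-1) ^ g0 i * int (y i choose g0 i)"
      by blast
    from i(2) have "int p dvd (-1) ^ g0 i \<or> int p dvd int (y i choose g0 i)"
      by (simp only: prime_dvd_mult_iff[OF ppi])
    then show False
    proof
      assume "int p dvd (-1) ^ g0 i"
      then have "int p dvd -1" using prime_dvd_power[OF ppi] by blast
      then have "int p dvd 1" by simp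
      then show False using not_prime_unit ppi by blast
    next
      assume "int p dvd int (y i choose g0 i)"
      then have "p dvd (y i choose g0 i)" by (simp add: int_dvd_int_iff)
      moreover have "g0 i \<le> y i" using i(1) unfolding g0_def by (simp add: gk_le)
      ultimately show False using binom_not_dvd[OF pp yp[of i], of "g0 i"] by simp
    qed
  qed
  have ex: "\<exists>e. \<not> int p dvd beta_coeff p y m e" using ndvd by blast
  have least: "(LEAST e. \<not> int p dvd beta_coeff p y m e) = E"
  proof (rule Least_equality)
    show "\<not> int p dvd beta_coeff p y m E" by (rule ndvd)
    fix e assume "\<not> int p dvd beta_coeff p y m e"
    then show "E \<le> e" using below unfolding E_def by (metis dvd_0_right not_le)
  qed
  show ?thesis unfolding val_a_def using ex least E_def by simp
qed


lemma gk_Suc: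
  assumes "Yv y l \<le> m" "m < Yv y (Suc l)"
  shows "gk y (Suc m) i = gk y m i + (if i = l then 1 else 0)"
proof (cases "i = l")
  case True
  then show ?thesis using assms by (simp add: gk_def Yv_Suc)
next
  case False
  show ?thesis
  proof (cases "i < l")
    case True
    then have "Yv y (Suc i) \<le> Yv y l" by (intro Yv_mono) simp
    then have "Yv y i + y i \<le> m" using assms by (simp add: Yv_Suc)
    then show ?thesis using False by (simp add: gk_def)
  next
    case False2: False
    then have "Suc l \<le> i" using False by simp
    then have "Yv y (Suc l) \<le> Yv y i" by (rule Yv_mono)
    then show ?thesis using assms False by (simp add: gk_def)
  qed
qed

lemma g_Suc:
  assumes inf: "not_nonneg_int y"
  shows "\<exists>l. Yv y l \<le> m \<and> m < Yv y (Suc l) \<and> gg p y (Suc m) = gg p y m + p^l"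
proof -
  obtain j where j: "Suc m \<le> Yv y j" using Yv_unbounded[OF inf] by blast
  then have ex: "m < Yv y j" by simp
  define J where "J = (LEAST j. m < Yv y j)"
  have J1: "m < Yv y J" unfolding J_def using ex by (rule LeastI)
  have J0: "J \<noteq> 0"
  proof
    assume "J = 0"
    then show False using J1 by (simp add: Yv_0)
  qed
  then obtain l where l: "J = Suc l" by (cases J) auto
  have l1: "Yv y l \<le> m"
  proof (rule ccontr)
    assume "\<not> Yv y l \<le> m"
    then have "J \<le> l" unfolding J_def by (intro Least_le) simp
    then show False using l by simp
  qed
  have l2: "m < Yv y (Suc l)" using J1 l by simp
  define N where "N = NN y (Suc m)"
  have N1: "Suc m \<le> Yv y N" unfolding N_def by (rule NN_prop[OF inf])
  have NNm: "NN y m \<le> N" using N1 by (intro NN_le) simp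
  have lN: "l < N"
  proof (rule ccontr)
    assume "\<not> l < N"
    then have "Yv y N \<le> Yv y l" by (intro Yv_mono) simp
    then show False using N1 l1 by simp
  qed
  have "gg p y (Suc m) = (\<Sum>i<N. gk y (Suc m) i * p^i)" unfolding gg_def N_def ..
  also have "\<dots> = (\<Sum>i<N. gk y m i * p^i + (if i = l then p^i else 0))"
    by (rule sum.cong) (auto simp: gk_Suc[OF l1 l2] algebra_simps)
  also have "\<dots> = (\<Sum>i<N. gk y m i * p^i) + p^l"
    using lN by (simp add: sum.distrib)
  also have "(\<Sum>i<N. gk y m i * p^i) = gg p y m" by (rule gg_ext[OF inf NNm])
  finally show ?thesis using l1 l2 by blast
qed

lemma Y_order:
  assumes "Yv y l \<le> m" "m < Yv y (Suc l)" "Yv y l' \<le> m'" "m' < Yv y (Suc l')" "m \<le> m'"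
  shows "l \<le> l'"
proof (rule ccontr)
  assume "\<not> l \<le> l'"
  then have "Yv y (Suc l') \<le> Yv y l" by (intro Yv_mono) simp
  then show False using assms by simp
qed

definition cc :: "nat \<Rightarrow> (nat \<Rightarrow> nat) \<Rightarrow> nat \<Rightarrow> nat" where
  "cc p y m = gg p y (Suc m) - gg p y m"

lemma cc_props:
  assumes pp: "prime p" and dig: "padic_digits p y" and inf: "not_nonneg_int y"
  shows "gg p y (Suc m) = gg p y m + cc p y m"
    and "cc p y m \<ge> 1"
    and "m \<le> m' \<Longrightarrow> cc p y m \<le> cc p y m'"
    and "m + (p - 1) \<le> m' \<Longrightarrow> cc p y m < cc p y m'"
proof -
  have p2: "p \<ge> 2" using pp by (rule prime_ge_2_nat)
  obtain l where l: "Yv y l \<le> m" "m < Yv y (Suc l)" "gg p y (Suc m) = gg p y m + p^l"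
    using g_Suc[OF inf] by blast
  obtain l' where l': "Yv y l' \<le> m'" "m' < Yv y (Suc l')" "gg p y (Suc m') = gg p y m' + p^l'"
    using g_Suc[OF inf] by blast
  have c: "cc p y m = p^l" using l(3) by (simp add: cc_def)
  have c': "cc p y m' = p^l'" using l'(3) by (simp add: cc_def)
  show "gg p y (Suc m) = gg p y m + cc p y m" using l(3) c by simp
  show "cc p y m \<ge> 1" using c p2 by simp
  show "cc p y m \<le> cc p y m'" if "m \<le> m'"
  proof -
    have "l \<le> l'" by (rule Y_order[OF l(1,2) l'(1,2) that])
    then show ?thesis using c c' p2 by (simp add: power_increasing)
  qed
  show "cc p y m < cc p y m'" if mm: "m + (p - 1) \<le> m'"
  proof -
    have "l \<le> l'" by (rule Y_order[OF l(1,2) l'(1,2)]) (use mm in simp)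
    moreover have "l \<noteq> l'"
    proof
      assume "l = l'"
      have "y l < p" using dig by (simp add: padic_digits_def)
      then show False using l l' \<open>l = l'\<close> mm by (simp add: Yv_Suc)
    qed
    ultimately have "l < l'" by simp
    then show ?thesis using c c' p2 by (simp add: power_strict_increasing)
  qed
qed

lemma gg_add:
  assumes pp: "prime p" and dig: "padic_digits p y" and inf: "not_nonneg_int y"
  shows "gg p y (a + d) = gg p y a + (\<Sum>j<d. cc p y (a + j))"
  by (induction d) (simp_all add: cc_props(1)[OF pp dig inf])

lemma gg_mono:
  assumes pp: "prime p" and dig: "padic_digits p y" and inf: "not_nonneg_int y"
  shows "m < m' \<Longrightarrow> gg p y m < gg p y m'"
proof -
  have "gg p y n < gg p y (Suc n)" for n using cc_props(1,2)[OF pp dig inf, of n] by simp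
  then show "m < m' \<Longrightarrow> gg p y m < gg p y m'" by (rule lift_Suc_mono_less)
qed

lemma gg_conv:
  assumes pp: "prime p" and dig: "padic_digits p y" and inf: "not_nonneg_int y"
  and ab: "a + p \<le> b" and d0: "0 < d"
  shows "gg p y (a+d) + gg p y b < gg p y (b+d) + gg p y a"
proof -
  define s where "s = b - a"
  have bs: "b = a + s" unfolding s_def using ab by simp
  have sp: "p \<le> s" unfolding s_def using ab by simp
  have p2: "p \<ge> 2" using pp by (rule prime_ge_2_nat)
  note GA = gg_add[OF pp dig inf]
  have e1: "gg p y b = gg p y a + (\<Sum>j<s. cc p y (a + j))" unfolding bs by (rule GA)
  have e2: "gg p y (b + d) = gg p y (a + d) + (\<Sum>j<s. cc p y (a + d + j))"
    unfolding bs using GA[of "a + d" s] by (simp add: ac_simps)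
  have lt: "(\<Sum>j<s. cc p y (a + j)) < (\<Sum>j<s. cc p y (a + d + j))"
  proof (rule ccontr)
    assume nlt: "\<not> ?thesis"
    have le: "\<forall>j\<in>{..<s}. cc p y (a + j) \<le> cc p y (a + d + j)"
      using cc_props(3)[OF pp dig inf] by simp
    have eqj: "\<forall>j<s. cc p y (a + j) = cc p y (a + d + j)"
    proof (rule ccontr)
      assume "\<not> ?thesis"
      then obtain j where "j < s" "cc p y (a + j) \<noteq> cc p y (a + d + j)" by blast
      then have "\<exists>j\<in>{..<s}. cc p y (a + j) < cc p y (a + d + j)" using le by force
      then have "(\<Sum>j<s. cc p y (a + j)) < (\<Sum>j<s. cc p y (a + d + j))"
        using le by (intro sum_strict_mono_ex1) auto
      then show False using nlt by simp
    qed
    have const: "t < s + d \<longrightarrow> cc p y (a + t) = cc p y a" for t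
    proof (induction t rule: less_induct)
      case (less t)
      show ?case
      proof
        assume ts: "t < s + d"
        show "cc p y (a + t) = cc p y a"
        proof (cases "t < d")
          case True
          have "cc p y a \<le> cc p y (a + t)" using cc_props(3)[OF pp dig inf] by simp
          moreover have "cc p y (a + t) \<le> cc p y (a + d)" using cc_props(3)[OF pp dig inf] True by simp
          moreover have "cc p y (a + d) = cc p y a" using eqj[rule_format, of 0] sp p2 by simp
          ultimately show ?thesis by simp
        next
          case False
          then have td: "t - d < s" "t - d < t" using ts d0 by auto
          have "cc p y (a + t) = cc p y (a + d + (t - d))" using False by simp
          also have "\<dots> = cc p y (a + (t - d))" using eqj td(1) by simp
          also have "\<dots> = cc p y a" using less.IH[OF td(2)] td(1) by simp
          finally show ?thesis .
        qed
      qed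
    qed
    have "cc p y (a + (p - 1)) = cc p y a" using const[of "p - 1"] sp d0 by simp
    moreover have "cc p y a < cc p y (a + (p - 1))" by (rule cc_props(4)[OF pp dig inf]) simp
    ultimately show False by simp
  qed
  show ?thesis using e1 e2 lt by simp
qed


lemma sum_enat_nat: "finite S \<Longrightarrow> (\<Sum>k\<in>S. enat (f k)) = enat (\<Sum>k\<in>S. f k)"
  by (induction S rule: finite_induct) (simp_all add: zero_enat_def)

lemma sum_enat_inf: "finite S \<Longrightarrow> k \<in> S \<Longrightarrow> f k = (\<infinity>::enat) \<Longrightarrow> sum f S = \<infinity>"
  by (simp add: sum.remove)

lemma val_Psi_fin:
  assumes pp: "prime p" and dig: "padic_digits p y" and inf: "not_nonneg_int y" and le: "j \<le> p*k"
  shows "val_Psi p y k j = enat (gg p y (p*k - j))"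
proof -
  have "int p * int k - int j = int (p*k - j)" using le by (simp add: of_nat_diff)
  then show ?thesis unfolding val_Psi_def using val_a_eq[OF pp dig inf] by simp
qed

lemma val_Psi_inf:
  assumes "\<not> j \<le> p*k"
  shows "val_Psi p y k j = \<infinity>"
proof -
  have "int p * int k - int j < 0" using assms by (simp add: of_nat_mult[symmetric] del: of_nat_mult)
  then show ?thesis unfolding val_Psi_def val_a_def by simp
qed

theorem corollary5p8:
  fixes p :: nat and y :: "nat \<Rightarrow> nat" and n :: nat
  assumes "prime p" and "padic_digits p y" and "not_nonneg_int y" and "n \<ge> 1"
  shows "\<forall>S \<sigma>. finite S \<and> S \<subseteq> {0<..} \<and> card S = n \<and> \<sigma> permutes S \<longrightarrow>
           v_perm p y {1..n} id \<le> v_perm p y S \<sigma> \<and>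
           (v_perm p y S \<sigma> = v_perm p y {1..n} id \<longrightarrow> S = {1..n} \<and> \<sigma> = id)"
proof (intro allI impI)
  fix S :: "nat set" and \<sigma> :: "nat \<Rightarrow> nat"
  assume H: "finite S \<and> S \<subseteq> {0<..} \<and> card S = n \<and> \<sigma> permutes S"
  note pp = assms(1) and dig = assms(2) and inf = assms(3)
  have fin: "finite S" and cS: "card S = n" and perm: "\<sigma> permutes S"
    using H by auto
  have nz: "0 \<notin> S"
  proof
    assume "0 \<in> S"
    moreover have "S \<subseteq> {0<..}" using H by (rule conjE) (erule conjE)
    ultimately have "(0::nat) \<in> {0<..}" by (rule subsetD[rotated])
    then show False by simp
  qed
  have p2: "p \<ge> 2" using pp by (rule prime_ge_2_nat)
  have Vid: "v_perm p y {1..n} id = enat (\<Sum>k\<in>{1..n}. gg p y ((p-1)*k))"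
  proof -
    have "v_perm p y {1..n} id = (\<Sum>k\<in>{1..n}. enat (gg p y ((p-1)*k)))"
      unfolding v_perm_def
    proof (rule sum.cong)
      fix k assume "k \<in> {1..n}"
      have "k \<le> p*k" using p2 by simp
      moreover have "p*k - k = (p-1)*k" by (simp add: diff_mult_distrib)
      ultimately show "val_Psi p y k (id k) = enat (gg p y ((p-1)*k))"
        using val_Psi_fin[OF pp dig inf, of k k] by simp
    qed simp
    then show ?thesis by (simp add: sum_enat_nat)
  qed
  show "v_perm p y {1..n} id \<le> v_perm p y S \<sigma> \<and>
           (v_perm p y S \<sigma> = v_perm p y {1..n} id \<longrightarrow> S = {1..n} \<and> \<sigma> = id)"
  proof (cases "\<forall>k\<in>S. \<sigma> k \<le> p*k")
    case True
    have VS: "v_perm p y S \<sigma> = enat (\<Sum>k\<in>S. gg p y (p*k - \<sigma> k))"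
    proof -
      have "v_perm p y S \<sigma> = (\<Sum>k\<in>S. enat (gg p y (p*k - \<sigma> k)))"
        unfolding v_perm_def using True val_Psi_fin[OF pp dig inf] by (intro sum.cong) auto
      then show ?thesis using fin by (simp add: sum_enat_nat)
    qed
    have M: "(\<Sum>k\<in>{1..n}. gg p y ((p-1)*k)) \<le> (\<Sum>k\<in>S. gg p y (p*k - \<sigma> k)) \<and>
     ((\<Sum>k\<in>S. gg p y (p*k - \<sigma> k)) = (\<Sum>k\<in>{1..n}. gg p y ((p-1)*k)) \<longrightarrow> S = {1..n} \<and> \<sigma> = id)"
      by (rule main_abstract[OF p2 gg_mono[OF pp dig inf] gg_conv[OF pp dig inf] fin nz cS perm True])
    show ?thesis unfolding Vid VS using M by simp
  next
    case False
    then obtain k where k: "k \<in> S" "\<not> \<sigma> k \<le> p*k" by blast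
    have "v_perm p y S \<sigma> = \<infinity>" unfolding v_perm_def
      by (rule sum_enat_inf[OF fin k(1)]) (rule val_Psi_inf[OF k(2)])
    then show ?thesis unfolding Vid by simp
  qed
qed

end
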